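(* Let $C$ be a complex geodesic with polar point $p$, let $\mathrm G$ be a geodesic not included in $C$, and let $g,g'$ be distinct negative points of $\mathrm G$. If $\mathrm G\cap C\cap \mathrm BV\neq\varnothing$, then $\dfrac{\langle g,p\rangle\langle p,g'\rangle}{\langle g,g'\rangle}\in\mathbb R$. Suppose now that $\dfrac{\langle g,p\rangle\langle p,g'\rangle}{\langle g,g'\rangle}\notin\mathbb R$. Then there exists a unique point of $\mathrm G$ closest to $C$, and the condition $\mathrm{ta}(\mathrm G,C)=\mathrm{ta}(g,C)$ is equivalent to $\mathrm{Re}\dfrac{\langle p,g'\rangle\langle g,g\rangle}{\langle g,g'\rangle\langle p,g\rangle}=1$.
   Context: $V$ is a $3$-dimensional complex vector space with a hermitian form $\langle-,-\rangle$ of signature $++-$; $\mathrm BV=\{x\in\mathbb{CP}V:\langle x,x\rangle<0\}$ is the complex hyperbolic plane, $\mathrm SV$ the set of isotropic points, $\overline{\mathrm B}V=\mathrm BV\cup\mathrm SV$. Points are identified with representative vectors where expressions are projectively invariant. A complex geodesic is $C=\mathbb{CP}p^\perp\cap\overline{\mathrm B}V$ for a positive point $p$ (its polar point). A geodesic is a complete real geodesic in $\overline{\mathrm B}V$ (including its two ideal endpoints). For nonisotropic $x,y$, $\mathrm{ta}(x,y)=\frac{\langle x,y\rangle\langle y,x\rangle}{\langle x,x\rangle\langle y,y\rangle}$; for a negative point $g$, $\mathrm{ta}(g,C):=1-\mathrm{ta}(g,p)$ (equal to $\cosh^2$ of the distance from $g$ to $C$), and $\mathrm{ta}(\mathrm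 G,C):=\inf_{g\in\mathrm G\cap\mathrm BV}\mathrm{ta}(g,C)$. *)

theory Defs
  imports "HOL-Analysis.Analysis"
begin

definition herm :: "complex^3 \<Rightarrow> complex^3 \<Rightarrow> complex" where
  "herm x y = x$1 * cnj (y$1) + x$2 * cnj (y$2) - x$3 * cnj (y$3)"

text \<open>Points of CP(V) are represented by nonzero vectors; two vectors represent
the same point iff they are proportional.\<close>

definition same_point :: "complex^3 \<Rightarrow> complex^3 \<Rightarrow> bool" where
  "same_point x y \<longleftrightarrow> (\<exists>c::complex. c \<noteq> 0 \<and> y = c *s x)"

definition negative :: "complex^3 \<Rightarrow> bool" where
  "negative x \<longleftrightarrow> x \<noteq> 0 \<and> Re (herm x x) < 0"

definition positive :: "complex^3 \<Rightarrow> bool" where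
  "positive x \<longleftrightarrow> x \<noteq> 0 \<and> Re (herm x x) > 0"

definition in_cball :: "complex^3 \<Rightarrow> bool" where
  "in_cball x \<longleftrightarrow> x \<noteq> 0 \<and> Re (herm x x) \<le> 0"

definition complex_geodesic :: "complex^3 \<Rightarrow> (complex^3) set" where
  "complex_geodesic p = {x. in_cball x \<and> herm x p = 0}"

text \<open>Geodesic: projectivisation of a totally real 2-dimensional real subspace
R v + R w (with <v,w> real, v negative, v,w complex-independent), intersected
with the closed ball.\<close>
definition geodesic_through :: "complex^3 \<Rightarrow> complex^3 \<Rightarrow> (complex^3) set" where
  "geodesic_through v w = {x. in_cball x \<and>
      (\<exists>(a::real) (b::real) (c::complex). c \<noteq> 0 \<and>
         x = c *s (of_real a *s v + of_real b *s w))}"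

definition is_geodesic :: "(complex^3) set \<Rightarrow> bool" where
  "is_geodesic G \<longleftrightarrow> (\<exists>v w. negative v \<and> herm v w \<in> \<real> \<and>
      \<not> (\<exists>c::complex. w = c *s v) \<and> G = geodesic_through v w)"

definition ta :: "complex^3 \<Rightarrow> complex^3 \<Rightarrow> complex" where
  "ta x y = herm x y * herm y x / (herm x x * herm y y)"

definition ta_pt_cgeod :: "complex^3 \<Rightarrow> complex^3 \<Rightarrow> real" where
  "ta_pt_cgeod g p = 1 - Re (ta g p)"

definition ta_geod_cgeod :: "(complex^3) set \<Rightarrow> complex^3 \<Rightarrow> real" where
  "ta_geod_cgeod G p = (INF g\<in>{g\<in>G. negative g}. ta_pt_cgeod g p)"

end

theory Submission
  imports Defs
begin


lemma cs_ident:
  fixes m11 m12 m22 z1 z2 w1 w2 :: real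
  shows "(m11*z1^2 + 2*m12*z1*z2 + m22*z2^2) * (m11*w1^2 + 2*m12*w1*w2 + m22*w2^2)
     - (m11*z1*w1 + m12*(z1*w2+z2*w1) + m22*z2*w2)^2 = (m11*m22 - m12^2) * (z1*w2 - z2*w1)^2"
  by (simp add: power2_eq_square algebra_simps)

lemma quad_main:
  fixes q11 q12 q22 n11 n12 n22 :: real
  defines "Q \<equiv> \<lambda>a b. q11*a^2 + 2*q12*a*b + q22*b^2"
      and "N \<equiv> \<lambda>a b. n11*a^2 + 2*n12*a*b + n22*b^2"
      and "BQ \<equiv> \<lambda>a b c d. q11*a*c + q12*(a*d+b*c) + q22*b*d"
      and "BN \<equiv> \<lambda>a b c d. n11*a*c + n12*(a*d+b*c) + n22*b*d"
  assumes q11: "q11 \<ge> 0" and dQ: "q11*q22 - q12^2 > 0"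
      and n11: "n11 > 0" and dN: "n11*n22 - n12^2 < 0"
  shows "\<exists>k1 k2. N k1 k2 > 0 \<and> (\<forall>a b. N a b > 0 \<longrightarrow> Q k1 k2 / N k1 k2 \<le> Q a b / N a b)
     \<and> (\<forall>a b c d. N a b > 0 \<longrightarrow> N c d > 0 \<longrightarrow> Q a b / N a b = Q k1 k2 / N k1 k2
           \<longrightarrow> Q c d / N c d = Q k1 k2 / N k1 k2 \<longrightarrow> a*d - b*c = 0)
     \<and> (\<forall>a b c d. N a b > 0 \<longrightarrow> a*d - b*c \<noteq> 0 \<longrightarrow>
           (Q a b / N a b = Q k1 k2 / N k1 k2 \<longleftrightarrow> Q a b * BN a b c d = N a b * BQ a b c d))"
proof -
  define A where "A = n11*n22 - n12^2"
  define C where "C = q11*q22 - q12^2"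
  define Bc where "Bc = q11*n22 + q22*n11 - 2*q12*n12"
  define D where "D = Bc^2 - 4*A*C"
  define l where "l = (Bc - sqrt D)/(2*A)"
  have A0: "A < 0" using dN A_def by simp
  have C0: "C > 0" using dQ C_def by simp
  have q11p: "q11 > 0"
  proof (rule ccontr)
    assume "\<not> q11 > 0" then have "q11 = 0" using q11 by simp
    then show False using dQ by (simp add: power2_eq_square)
  qed
  have Qpos: "Q a b > 0" if "a \<noteq> 0 \<or> b \<noteq> 0" for a b
  proof -
    have e: "q11 * Q a b = (q11*a + q12*b)^2 + C*b^2" unfolding Q_def C_def by (simp add: power2_eq_square algebra_simps)
    have "(q11*a + q12*b)^2 + C*b^2 > 0"
    proof (cases "b = 0")
      case True then have "a \<noteq> 0" using that by simp
      then show ?thesis using True q11p by simp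
    next
      case False then show ?thesis using C0 by (simp add: add_nonneg_pos)
    qed
    then have "q11 * Q a b > 0" using e by simp
    then show ?thesis using q11p by (simp add: zero_less_mult_iff)
  qed
  have D0: "D > Bc^2" using A0 C0 D_def by (simp add: mult_neg_pos)
  have sD: "sqrt D > \<bar>Bc\<bar>" using D0 by (metis real_sqrt_abs real_sqrt_less_mono)
  have Dnn: "D \<ge> 0" using D0 by (smt (verit) zero_le_power2)
  have lpos: "l > 0" unfolding l_def using sD A0 by (simp add: divide_neg_neg)
  have lroot: "A*l^2 - Bc*l + C = 0"
  proof -
    have "(sqrt D)^2 = D" using Dnn by simp
    then show ?thesis unfolding l_def D_def using A0 by (simp add: field_simps power2_eq_square)
  qed
  define m11 where "m11 = q11 - l*n11"
  define m12 where "m12 = q12 - l*n12"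
  define m22 where "m22 = q22 - l*n22"
  have detM: "m11*m22 - m12^2 = 0"
  proof -
    have "m11*m22 - m12^2 = A*l^2 - Bc*l + C" unfolding m11_def m12_def m22_def A_def Bc_def C_def
      by (simp add: power2_eq_square algebra_simps)
    then show ?thesis using lroot by simp
  qed
  define M where "M = (\<lambda>a b. m11*a^2 + 2*m12*a*b + m22*b^2)"
  define BM where "BM = (\<lambda>a b c d. m11*a*c + m12*(a*d+b*c) + m22*b*d)"
  have Meq: "M a b = Q a b - l * N a b" for a b unfolding M_def Q_def N_def m11_def m12_def m22_def
    by (simp add: algebra_simps)
  have BMeq: "BM a b c d = BQ a b c d - l * BN a b c d" for a b c d
    unfolding BM_def BQ_def BN_def m11_def m12_def m22_def by (simp add: algebra_simps)
  have MM: "M a b * M c d = (BM a b c d)^2" for a b c d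
    using cs_ident[of m11 a m12 b m22 c d] detM unfolding M_def BM_def by simp
  have Nneg: "N (-n12) n11 < 0"
  proof -
    have "N (-n12) n11 = n11 * A" unfolding N_def A_def by (simp add: power2_eq_square algebra_simps)
    then show ?thesis using n11 A0 by (simp add: mult_pos_neg)
  qed
  have My: "M (-n12) n11 > 0"
  proof -
    have "Q (-n12) n11 > 0" using Qpos n11 by simp
    moreover have "l * N (-n12) n11 < 0" using lpos Nneg by (simp add: mult_pos_neg)
    ultimately show ?thesis using Meq by simp
  qed
  have Mnn: "M a b \<ge> 0" for a b
  proof -
    have "M a b * M (-n12) n11 \<ge> 0" using MM[of a b "-n12" n11] by simp
    then show ?thesis using My by (simp add: zero_le_mult_iff)
  qed
  obtain k1 k2 where k0: "k1 \<noteq> 0 \<or> k2 \<noteq> 0" and kk1: "m11*k1 + m12*k2 = 0" and kk2: "m12*k1 + m22*k2 = 0"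
  proof (cases "m11 \<noteq> 0 \<or> m12 \<noteq> 0")
    case True
    show ?thesis
      by (rule that[of m12 "-m11"]) (use True detM in \<open>auto simp: power2_eq_square algebra_simps\<close>)
  next
    case False
    then show ?thesis by (intro that[of 1 0]) auto
  qed
  have BMk: "BM a b k1 k2 = 0" for a b
  proof -
    have "BM a b k1 k2 = a*(m11*k1 + m12*k2) + b*(m12*k1 + m22*k2)" unfolding BM_def by (simp add: algebra_simps)
    then show ?thesis using kk1 kk2 by simp
  qed
  have Mk: "M k1 k2 = 0" using MM[of k1 k2 k1 k2] BMk[of k1 k2] by simp
  have Qk: "Q k1 k2 > 0" using Qpos k0 by simp
  have Nk: "N k1 k2 > 0"
  proof -
    have "Q k1 k2 = l * N k1 k2" using Mk Meq by simp
    then show ?thesis using Qk lpos by (metis zero_less_mult_pos)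
  qed
  have ratk: "Q k1 k2 / N k1 k2 = l" using Mk Meq Nk by (simp add: field_simps)
  have minl: "l \<le> Q a b / N a b" if "N a b > 0" for a b
  proof -
    have "l * N a b \<le> Q a b" using Mnn[of a b] Meq by simp
    then show ?thesis using that by (simp add: field_simps)
  qed
  have csQ: "Q a b * Q c d - (BQ a b c d)^2 = C * (a*d - b*c)^2" for a b c d
    using cs_ident[of q11 a q12 b q22 c d] unfolding Q_def BQ_def C_def by simp
  have csN: "N a b * N c d - (BN a b c d)^2 = A * (a*d - b*c)^2" for a b c d
    using cs_ident[of n11 a n12 b n22 c d] unfolding N_def BN_def A_def by simp
  have crossk: "a*k2 - b*k1 = 0" if "N a b > 0" "Q a b / N a b = l" for a b
  proof -
    have Qab: "Q a b = l * N a b" using that by (simp add: field_simps)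
    have Qk': "Q k1 k2 = l * N k1 k2" using Mk Meq by simp
    have "BQ a b k1 k2 = l * BN a b k1 k2" using BMk[of a b] BMeq[of a b k1 k2] by simp
    then have "l^2 * (N a b * N k1 k2 - (BN a b k1 k2)^2) = C * (a*k2 - b*k1)^2"
      using csQ[of a b k1 k2] Qab Qk' by (simp add: power2_eq_square algebra_simps)
    then have "l^2 * (A * (a*k2 - b*k1)^2) = C * (a*k2 - b*k1)^2" using csN[of a b k1 k2] by simp
    then have "(C - l^2 * A) * (a*k2 - b*k1)^2 = 0" by (auto simp: left_diff_distrib mult.assoc)
    moreover have "C - l^2 * A > 0" using C0 A0 by (smt (verit) mult_nonneg_nonpos zero_le_power2)
    ultimately show ?thesis by simp
  qed
  have uniq: "a*d - b*c = 0" if "N a b > 0" "N c d > 0" "Q a b / N a b = l" "Q c d / N c d = l" for a b c d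
  proof -
    have h1: "a*k2 - b*k1 = 0" and h2: "c*k2 - d*k1 = 0" using crossk that by auto
    have e1: "k1 * (a*d - b*c) = c*(a*k2 - b*k1) - a*(c*k2 - d*k1)" by (simp add: algebra_simps)
    have e2: "k2 * (a*d - b*c) = d*(a*k2 - b*k1) - b*(c*k2 - d*k1)" by (simp add: algebra_simps)
    have "k1 * (a*d - b*c) = 0" "k2 * (a*d - b*c) = 0" unfolding e1 e2 h1 h2 by simp_all
    then show ?thesis using k0 by auto
  qed
  have iff: "Q a b / N a b = l \<longleftrightarrow> Q a b * BN a b c d = N a b * BQ a b c d"
    if Nab: "N a b > 0" and cr: "a*d - b*c \<noteq> 0" for a b c d
  proof
    assume "Q a b / N a b = l"
    then have Qab: "Q a b = l * N a b" using Nab by (simp add: field_simps)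
    then have Mab: "M a b = 0" using Meq[of a b] by simp
    then have "BM a b c d = 0" using MM[of a b c d] by simp
    then have "BQ a b c d = l * BN a b c d" using BMeq by simp
    then show "Q a b * BN a b c d = N a b * BQ a b c d" using Qab by simp
  next
    assume h: "Q a b * BN a b c d = N a b * BQ a b c d"
    define l' where "l' = Q a b / N a b"
    have Qab: "Q a b = l' * N a b" using Nab l'_def by simp
    have "a \<noteq> 0 \<or> b \<noteq> 0" using Nab unfolding N_def by auto
    then have l'pos: "l' > 0" using Qpos[of a b] Nab l'_def by simp
    have e1: "(q11 - l'*n11)*a^2 + 2*(q12 - l'*n12)*a*b + (q22 - l'*n22)*b^2 = 0"
      using Qab unfolding Q_def N_def by (simp add: algebra_simps)
    have "BQ a b c d = (N a b * BQ a b c d) / N a b" using Nab by simp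
    also have "\<dots> = (Q a b * BN a b c d) / N a b" using h by simp
    also have "\<dots> = l' * BN a b c d" using l'_def by simp
    finally have "BQ a b c d = l' * BN a b c d" .
    then have e2: "(q11 - l'*n11)*a*c + (q12 - l'*n12)*(a*d+b*c) + (q22 - l'*n22)*b*d = 0"
      unfolding BQ_def BN_def by (simp add: algebra_simps)
    have "((q11 - l'*n11)*(q22 - l'*n22) - (q12 - l'*n12)^2) * (a*d - b*c)^2 = 0"
      using cs_ident[of "q11 - l'*n11" a "q12 - l'*n12" b "q22 - l'*n22" c d] e1 e2 by simp
    then have "(q11 - l'*n11)*(q22 - l'*n22) - (q12 - l'*n12)^2 = 0" using cr by simp
    then have r': "A*l'^2 - Bc*l' + C = 0" unfolding A_def Bc_def C_def by (simp add: power2_eq_square algebra_simps)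
    have "(l' - l) * (A*(l'+l) - Bc) = 0" using r' lroot by (simp add: power2_eq_square algebra_simps)
    moreover have "A*(l'+l) - Bc \<noteq> 0"
    proof
      assume "A*(l'+l) - Bc = 0"
      then have "Bc = A*(l'+l)" by simp
      then have "A*(l*l') = C" using lroot by (simp add: power2_eq_square algebra_simps)
      moreover have "A*(l*l') < 0" using A0 lpos l'pos by (simp add: mult_neg_pos)
      ultimately show False using C0 by simp
    qed
    ultimately show "Q a b / N a b = l" using l'_def by simp
  qed
  show ?thesis
    unfolding ratk
    apply (rule exI[of _ k1], rule exI[of _ k2])
    unfolding ratk using Nk minl uniq iff by blast
qed


lemma herm_cnj: "herm y x = cnj (herm x y)" by (simp add: herm_def)
lemma herm_add_left: "herm (x + y) z = herm x z + herm y z" by (simp add: herm_def algebra_simps)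
lemma herm_add_right: "herm z (x + y) = herm z x + herm z y" by (simp add: herm_def algebra_simps)
lemma herm_smult_left: "herm (c *s x) z = c * herm x z" by (simp add: herm_def algebra_simps)
lemma herm_smult_right: "herm z (c *s x) = cnj c * herm z x" by (simp add: herm_def algebra_simps)
lemma herm_self_real: "herm x x = complex_of_real (Re (herm x x))"
  by (simp add: herm_def complex_eq_iff)

lemma lagrange2:
  fixes a b d e :: complex
  shows "(cmod (a*cnj d + b*cnj e))^2 \<le> ((cmod a)^2 + (cmod b)^2) * ((cmod d)^2 + (cmod e)^2)"
proof -
  have "((cmod a)^2 + (cmod b)^2) * ((cmod d)^2 + (cmod e)^2) - (cmod (a*cnj d + b*cnj e))^2 = (cmod (a*e - b*d))^2"
    unfolding cmod_power2 by (simp add: power2_eq_square algebra_simps)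
  then show ?thesis by (smt (verit) zero_le_power2)
qed

lemma herm_self_cmod: "Re (herm x x) = (cmod (x$1))^2 + (cmod (x$2))^2 - (cmod (x$3))^2"
  unfolding cmod_power2 by (simp add: herm_def power2_eq_square)

lemma orth_pos:
  assumes v: "negative v" and o: "herm x v = 0" and x: "x \<noteq> 0"
  shows "Re (herm x x) > 0"
proof (rule ccontr)
  assume "\<not> Re (herm x x) > 0"
  then have h: "(cmod (x$1))^2 + (cmod (x$2))^2 \<le> (cmod (x$3))^2" using herm_self_cmod[of x] by simp
  have hv: "(cmod (v$1))^2 + (cmod (v$2))^2 < (cmod (v$3))^2" using v herm_self_cmod[of v] unfolding negative_def by simp
  have eq: "x$3 * cnj (v$3) = x$1 * cnj (v$1) + x$2 * cnj (v$2)" using o unfolding herm_def by (simp add: algebra_simps)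
  have "(cmod (x$3))^2 * (cmod (v$3))^2 = (cmod (x$1 * cnj (v$1) + x$2 * cnj (v$2)))^2"
    using eq by (metis complex_mod_cnj norm_mult power_mult_distrib)
  also have "\<dots> \<le> ((cmod (x$1))^2 + (cmod (x$2))^2) * ((cmod (v$1))^2 + (cmod (v$2))^2)" by (rule lagrange2)
  finally have i1: "(cmod (x$3))^2 * (cmod (v$3))^2 \<le> ((cmod (x$1))^2 + (cmod (x$2))^2) * ((cmod (v$1))^2 + (cmod (v$2))^2)" .
  show False
  proof (cases "x$3 = 0")
    case True
    then have "(cmod (x$1))^2 = 0 \<and> (cmod (x$2))^2 = 0" using h by (smt (verit) zero_le_power2 norm_zero power_zero_numeral)
    then have "x$1 = 0" "x$2 = 0" by auto
    then have "x = 0" using True by (simp add: vec_eq_iff forall_3)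
    then show False using x by simp
  next
    case False
    then have c3: "(cmod (x$3))^2 > 0" by simp
    have "((cmod (x$1))^2 + (cmod (x$2))^2) * ((cmod (v$1))^2 + (cmod (v$2))^2) \<le> (cmod (x$3))^2 * ((cmod (v$1))^2 + (cmod (v$2))^2)"
      using h by (simp add: mult_right_mono)
    also have "\<dots> < (cmod (x$3))^2 * (cmod (v$3))^2" using hv c3 by simp
    finally show False using i1 by simp
  qed
qed


lemma ccnj: "c * cnj c = complex_of_real ((cmod c)^2)" by (simp only: complex_norm_square)

theorem lemma4p1:
  fixes p g g' :: "complex^3" and G :: "(complex^3) set"
  assumes p: "positive p"
    and G: "is_geodesic G"
    and notin: "\<not> G \<subseteq> complex_geodesic p"
    and g: "g \<in> G" "negative g"
    and g': "g' \<in> G" "negative g'"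
    and dist: "\<not> same_point g g'"
  shows "((\<exists>x\<in>G \<inter> complex_geodesic p. negative x) \<longrightarrow>
            herm g p * herm p g' / herm g g' \<in> \<real>)
     \<and> (herm g p * herm p g' / herm g g' \<notin> \<real> \<longrightarrow>
          ((\<exists>x\<in>G. negative x \<and> ta_pt_cgeod x p = ta_geod_cgeod G p \<and>
              (\<forall>y\<in>G. negative y \<and> ta_pt_cgeod y p = ta_geod_cgeod G p \<longrightarrow> same_point x y))
           \<and> (ta_geod_cgeod G p = ta_pt_cgeod g p \<longleftrightarrow>
              Re (herm p g' * herm g g / (herm g g' * herm p g)) = 1)))"
proof -
  obtain v w where v: "negative v" and vwR: "herm v w \<in> \<real>" and nind: "\<not> (\<exists>c. w = c *s v)"
    and Gd: "G = geodesic_through v w" using G unfolding is_geodesic_def by blast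
  define u where "u = (\<lambda>a b::real. complex_of_real a *s v + complex_of_real b *s w)"
  define V where "V = Re (herm v v)"
  define R where "R = Re (herm v w)"
  define Wq where "Wq = Re (herm w w)"
  define P where "P = herm v p"
  define S where "S = herm w p"
  define pp where "pp = Re (herm p p)"
  define q11 where "q11 = (Re P)^2 + (Im P)^2"
  define q12 where "q12 = Re P * Re S + Im P * Im S"
  define q22 where "q22 = (Re S)^2 + (Im S)^2"
  define J where "J = Im P * Re S - Re P * Im S"
  define Q where "Q = (\<lambda>a b::real. q11*a^2 + 2*q12*a*b + q22*b^2)"
  define N where "N = (\<lambda>a b::real. (-V)*a^2 + 2*(-R)*a*b + (-Wq)*b^2)"
  define BQ where "BQ = (\<lambda>a b c d::real. q11*a*c + q12*(a*d+b*c) + q22*b*d)"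
  define BN where "BN = (\<lambda>a b c d::real. (-V)*a*c + (-R)*(a*d+b*c) + (-Wq)*b*d)"
  define L where "L = (\<lambda>a b::real. complex_of_real a * P + complex_of_real b * S)"
  have hvv: "herm v v = of_real V" unfolding V_def by (rule herm_self_real)
  have hww: "herm w w = of_real Wq" unfolding Wq_def by (rule herm_self_real)
  have hvw: "herm v w = of_real R" unfolding R_def using vwR by (simp add: complex_is_Real_iff complex_eq_iff)
  have hwv: "herm w v = of_real R" using hvw herm_cnj[of w v] by simp
  have hpp: "herm p p = of_real pp" unfolding pp_def by (rule herm_self_real)
  have pp0: "pp > 0" using p unfolding positive_def pp_def by simp
  have V0: "V < 0" using v unfolding negative_def V_def by simp
  have hu: "herm (u a b) (u c d) = of_real (- BN a b c d)" for a b c d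
    unfolding u_def BN_def by (simp add: herm_add_left herm_add_right herm_smult_left herm_smult_right hvv hww hvw hwv algebra_simps)
  have NBN: "N a b = BN a b a b" for a b unfolding N_def BN_def by (simp add: power2_eq_square algebra_simps)
  have hup: "herm (u a b) p = L a b" for a b
    unfolding u_def L_def P_def S_def by (simp add: herm_add_left herm_smult_left)
  have hpu: "herm p (u a b) = cnj (L a b)" for a b using hup herm_cnj by metis
  have Lq: "L a b * cnj (L c d) = Complex (BQ a b c d) ((a*d - b*c) * J)" for a b c d
    unfolding L_def BQ_def J_def q11_def q12_def q22_def by (simp add: complex_eq_iff power2_eq_square algebra_simps)
  have LQ: "L a b * cnj (L a b) = of_real (Q a b)" for a b
    using Lq[of a b a b] unfolding Q_def BQ_def by (simp add: complex_eq_iff power2_eq_square algebra_simps)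
  have dQ: "q11*q22 - q12^2 = J^2" unfolding q11_def q12_def q22_def J_def by (simp add: power2_eq_square algebra_simps)
  have hxx: "herm (c *s u a b) (c *s u a b) = of_real (- ((cmod c)^2 * N a b))" for c a b
  proof -
    have "herm (c *s u a b) (c *s u a b) = (c * cnj c) * herm (u a b) (u a b)"
      by (simp add: herm_smult_left herm_smult_right)
    also have "\<dots> = of_real ((cmod c)^2) * of_real (- N a b)" unfolding ccnj hu NBN by simp
    finally show ?thesis by simp
  qed
  have negu: "negative (c *s u a b) \<longleftrightarrow> N a b > 0" if c0: "c \<noteq> 0" for c a b
  proof
    assume "negative (c *s u a b)"
    then have "Re (herm (c *s u a b) (c *s u a b)) < 0" unfolding negative_def by simp
    then have "(cmod c)^2 * N a b > 0" unfolding hxx by simp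
    then show "N a b > 0" by (simp add: zero_less_mult_iff)
  next
    assume Np: "N a b > 0"
    then have "(cmod c)^2 * N a b > 0" using c0 by simp
    then have r: "Re (herm (c *s u a b) (c *s u a b)) < 0" unfolding hxx by simp
    then have "c *s u a b \<noteq> 0" by (auto simp: herm_def)
    then show "negative (c *s u a b)" using r unfolding negative_def by simp
  qed
  have negG: "(x \<in> G \<and> negative x) \<longleftrightarrow> (\<exists>c a b. c \<noteq> 0 \<and> x = c *s u a b \<and> N a b > 0)" for x
  proof
    assume "x \<in> G \<and> negative x"
    then obtain a b c where c: "c \<noteq> 0" and x: "x = c *s u a b" and nx: "negative x"
      unfolding Gd geodesic_through_def u_def by blast
    then show "\<exists>c a b. c \<noteq> 0 \<and> x = c *s u a b \<and> N a b > 0" using negu by blast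
  next
    assume "\<exists>c a b. c \<noteq> 0 \<and> x = c *s u a b \<and> N a b > 0"
    then obtain a b c where c: "c \<noteq> 0" and x: "x = c *s u a b" and Np: "N a b > 0" by blast
    then have nx: "negative x" using negu by blast
    then have "in_cball x" unfolding negative_def in_cball_def by simp
    then have "x \<in> G" unfolding Gd geodesic_through_def u_def using c x by (auto simp: u_def)
    then show "x \<in> G \<and> negative x" using nx by simp
  qed
  have taF: "ta_pt_cgeod (c *s u a b) p = 1 + Q a b / (N a b * pp)" if c0: "c \<noteq> 0" and Np: "N a b > 0" for c a b
  proof -
    have "ta (c *s u a b) p = (c * cnj c) * (L a b * cnj (L a b)) / ((c * cnj c) * (of_real (- N a b) * herm p p))"
      unfolding ta_def herm_smult_left herm_smult_right hup hpu hu NBN[symmetric]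
      by (simp add: mult_ac)
    also have "\<dots> = (L a b * cnj (L a b)) / (of_real (- N a b) * herm p p)" using c0 by simp
    also have "\<dots> = of_real (- (Q a b / (N a b * pp)))" unfolding LQ hpp by simp
    finally show ?thesis unfolding ta_pt_cgeod_def by simp
  qed
  have ab0: "a \<noteq> 0 \<or> b \<noteq> 0" if "N a b > 0" for a b using that unfolding N_def by auto
  obtain c1 z1 z2 where c1: "c1 \<noteq> 0" and gz: "g = c1 *s u z1 z2" and Nz: "N z1 z2 > 0" using negG g by blast
  obtain c2 h1 h2 where c2: "c2 \<noteq> 0" and gh: "g' = c2 *s u h1 h2" and Nh: "N h1 h2 > 0" using negG g' by blast
  have rat: "herm g p * herm p g' / herm g g' = (L z1 z2 * cnj (L h1 h2)) / of_real (- BN z1 z2 h1 h2)"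
    unfolding gz gh herm_smult_left herm_smult_right hup hpu hu using c1 c2 by (simp add: mult_ac)
  have ImR: "Im (herm g p * herm p g' / herm g g') = (z1*h2 - z2*h1)*J / (- BN z1 z2 h1 h2)"
    unfolding rat Lq by simp
  have part1: "herm g p * herm p g' / herm g g' \<in> \<real>" if ex: "\<exists>x\<in>G \<inter> complex_geodesic p. negative x"
  proof -
    obtain x where xG: "x \<in> G" and xC: "x \<in> complex_geodesic p" and nx: "negative x" using ex by blast
    obtain c a b where c: "c \<noteq> 0" and xe: "x = c *s u a b" and Nab: "N a b > 0" using negG xG nx by blast
    have "herm x p = 0" using xC unfolding complex_geodesic_def by simp
    then have L0: "L a b = 0" unfolding xe herm_smult_left hup using c by simp
    have "Im (L a b * cnj (L 0 1)) = a * J" "Im (L a b * cnj (L 1 0)) = - b * J" unfolding Lq by simp_all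
    then have "a * J = 0" "b * J = 0" unfolding L0 by simp_all
    then have "J = 0" using ab0[OF Nab] by auto
    then show ?thesis unfolding complex_is_Real_iff ImR by simp
  qed
  have detN: "(-V)*(-Wq) - (-R)^2 < 0"
  proof -
    define t where "t = - R / V"
    define w' where "w' = w + complex_of_real t *s v"
    have "herm w' v = of_real (R + t * V)" unfolding w'_def by (simp add: herm_add_left herm_smult_left hwv hvv)
    also have "R + t * V = 0" unfolding t_def using V0 by simp
    finally have o: "herm w' v = 0" by simp
    have "w' \<noteq> 0"
    proof
      assume "w' = 0"
      then have "\<forall>i. w$i + of_real t * v$i = 0" unfolding w'_def by (simp add: vec_eq_iff)
      then have "w = complex_of_real (-t) *s v" by (simp add: vec_eq_iff add_eq_0_iff2)
      then show False using nind by blast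
    qed
    then have pos: "Re (herm w' w') > 0" using orth_pos[OF v o] by simp
    have "herm w' w' = of_real (Wq + 2*t*R + t^2*V)" unfolding w'_def
      by (simp add: herm_add_left herm_add_right herm_smult_left herm_smult_right hwv hvv hvw hww power2_eq_square algebra_simps)
    then have "Wq + 2*t*R + t^2*V > 0" using pos by simp
    also have "Wq + 2*t*R + t^2*V = Wq - R^2 / V" unfolding t_def using V0 by (simp add: field_simps power2_eq_square)
    finally have "Wq - R^2/V > 0" .
    then have "V * (Wq - R^2/V) < 0" using V0 by (simp add: mult_neg_pos)
    then show ?thesis using V0 by (simp add: field_simps power2_eq_square)
  qed
  have part2: "(\<exists>x\<in>G. negative x \<and> ta_pt_cgeod x p = ta_geod_cgeod G p \<and>
              (\<forall>y\<in>G. negative y \<and> ta_pt_cgeod y p = ta_geod_cgeod G p \<longrightarrow> same_point x y))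
           \<and> (ta_geod_cgeod G p = ta_pt_cgeod g p \<longleftrightarrow>
              Re (herm p g' * herm g g / (herm g g' * herm p g)) = 1)"
    if nr: "herm g p * herm p g' / herm g g' \<notin> \<real>"
  proof -
    have Im0: "(z1*h2 - z2*h1)*J / (- BN z1 z2 h1 h2) \<noteq> 0" using nr unfolding complex_is_Real_iff ImR .
    then have cr: "z1*h2 - z2*h1 \<noteq> 0" and J0: "J \<noteq> 0" and BN0: "BN z1 z2 h1 h2 \<noteq> 0" by auto
    have q11: "q11 \<ge> 0" unfolding q11_def by simp
    have dQ': "q11*q22 - q12^2 > 0" unfolding dQ using J0 by simp
    obtain k1 k2 where Nk: "N k1 k2 > 0"
      and mink: "\<forall>a b. N a b > 0 \<longrightarrow> Q k1 k2 / N k1 k2 \<le> Q a b / N a b"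
      and uniqk: "\<forall>a b c d. N a b > 0 \<longrightarrow> N c d > 0 \<longrightarrow> Q a b / N a b = Q k1 k2 / N k1 k2
           \<longrightarrow> Q c d / N c d = Q k1 k2 / N k1 k2 \<longrightarrow> a*d - b*c = 0"
      and iffk: "\<forall>a b c d. N a b > 0 \<longrightarrow> a*d - b*c \<noteq> 0 \<longrightarrow>
           (Q a b / N a b = Q k1 k2 / N k1 k2 \<longleftrightarrow> Q a b * BN a b c d = N a b * BQ a b c d)"
    proof -
      have "-V > 0" using V0 by simp
      note qm = quad_main[of q11 q22 q12 "-V" "-Wq" "-R", OF q11 dQ' this detN]
      from qm obtain k1 k2 where
        "N k1 k2 > 0 \<and> (\<forall>a b. N a b > 0 \<longrightarrow> Q k1 k2 / N k1 k2 \<le> Q a b / N a b)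
        \<and> (\<forall>a b c d. N a b > 0 \<longrightarrow> N c d > 0 \<longrightarrow> Q a b / N a b = Q k1 k2 / N k1 k2
           \<longrightarrow> Q c d / N c d = Q k1 k2 / N k1 k2 \<longrightarrow> a*d - b*c = 0)
        \<and> (\<forall>a b c d. N a b > 0 \<longrightarrow> a*d - b*c \<noteq> 0 \<longrightarrow>
           (Q a b / N a b = Q k1 k2 / N k1 k2 \<longleftrightarrow> Q a b * BN a b c d = N a b * BQ a b c d))"
        unfolding Q_def N_def BQ_def BN_def by blast
      then show ?thesis using that by blast
    qed
    define xk where "xk = u k1 k2"
    have xk1: "xk = 1 *s u k1 k2" unfolding xk_def by simp
    have "\<exists>c a b. c \<noteq> 0 \<and> xk = c *s u a b \<and> N a b > 0" using xk1 Nk by (intro exI[of _ 1] exI[of _ k1] exI[of _ k2]) simp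
    then have xkG: "xk \<in> G" "negative xk" using negG[of xk] by simp_all
    define m where "m = 1 + Q k1 k2 / (N k1 k2 * pp)"
    have taxk: "ta_pt_cgeod xk p = m" unfolding xk1 m_def using taF[of 1 k1 k2] Nk by simp
    have divpp: "Q a b / (N a b * pp) = (Q a b / N a b) / pp" for a b by simp
    have charq: "ta_pt_cgeod (c *s u a b) p = m \<longleftrightarrow> Q a b / N a b = Q k1 k2 / N k1 k2"
      if "c \<noteq> 0" "N a b > 0" for c a b
    proof -
      have e: "(1 + x/pp = 1 + y/pp) = (x = y)" for x y using pp0 by simp
      show ?thesis unfolding taF[OF that] m_def divpp by (rule e)
    qed
    have lowb: "m \<le> ta_pt_cgeod y p" if yy: "y \<in> G" "negative y" for y
    proof -
      obtain c a b where c: "c \<noteq> 0" and ye: "y = c *s u a b" and Nab: "N a b > 0" using negG[of y] yy by blast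
      have "Q k1 k2 / N k1 k2 \<le> Q a b / N a b" using mink Nab by blast
      then have "Q k1 k2 / N k1 k2 / pp \<le> Q a b / N a b / pp" using pp0 by (intro divide_right_mono) auto
      then show ?thesis unfolding ye taF[OF c Nab] m_def divpp by simp
    qed
    have INF: "ta_geod_cgeod G p = m"
    proof -
      let ?A = "{g \<in> G. negative g}"
      have xkA: "xk \<in> ?A" using xkG by simp
      have bdd: "bdd_below ((\<lambda>g. ta_pt_cgeod g p) ` ?A)" by (rule bdd_belowI2[where m=m]) (use lowb in auto)
      have "(INF g\<in>?A. ta_pt_cgeod g p) \<le> m" using cINF_lower[OF bdd xkA] taxk by simp
      moreover have "m \<le> (INF g\<in>?A. ta_pt_cgeod g p)" using xkA lowb by (intro cINF_greatest) auto
      ultimately show ?thesis unfolding ta_geod_cgeod_def by simp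
    qed
    have ex1: "\<exists>x\<in>G. negative x \<and> ta_pt_cgeod x p = ta_geod_cgeod G p \<and>
              (\<forall>y\<in>G. negative y \<and> ta_pt_cgeod y p = ta_geod_cgeod G p \<longrightarrow> same_point x y)"
    proof (intro bexI[of _ xk] conjI ballI impI)
      show "xk \<in> G" "negative xk" by (fact xkG)+
      show "ta_pt_cgeod xk p = ta_geod_cgeod G p" unfolding INF taxk ..
      fix y assume yG: "y \<in> G" and hy: "negative y \<and> ta_pt_cgeod y p = ta_geod_cgeod G p"
      obtain c a b where c: "c \<noteq> 0" and ye: "y = c *s u a b" and Nab: "N a b > 0" using negG[of y] yG hy by blast
      have "Q a b / N a b = Q k1 k2 / N k1 k2" using charq[OF c Nab] hy INF ye by simp
      then have cr0: "k1*b - k2*a = 0" using uniqk[rule_format, of k1 k2 a b] Nk Nab by simp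
      define s where "s = (if k1 \<noteq> 0 then a / k1 else b / k2)"
      have k0: "k1 \<noteq> 0 \<or> k2 \<noteq> 0" using ab0[OF Nk] .
      have sa: "a = s * k1" and sb: "b = s * k2"
      proof -
        show "a = s * k1"
        proof (cases "k1 = 0")
          case True then have "k2 \<noteq> 0" using k0 by simp
          then show ?thesis using cr0 True by (simp add: s_def)
        next
          case False then show ?thesis by (simp add: s_def)
        qed
        show "b = s * k2"
        proof (cases "k1 = 0")
          case True then have "k2 \<noteq> 0" using k0 by simp
          then show ?thesis using True by (simp add: s_def)
        next
          case False
          have "k1 * b = k1 * (a / k1 * k2)" using cr0 False by (simp add: field_simps)
          then show ?thesis using False by (simp add: s_def field_simps)
        qed
      qed
      have s0: "s \<noteq> 0" using ab0[OF Nab] sa sb by auto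
      have "u a b = complex_of_real s *s u k1 k2" unfolding sa sb u_def
        by (simp add: vec_eq_iff algebra_simps)
      then have "y = (c * complex_of_real s) *s xk" unfolding ye xk_def by (simp add: vector_smult_assoc)
      moreover have "c * complex_of_real s \<noteq> 0" using c s0 by simp
      ultimately show "same_point xk y" unfolding same_point_def by blast
    qed
    have Lz0: "L z1 z2 \<noteq> 0"
    proof
      assume "L z1 z2 = 0"
      then have "herm g p * herm p g' / herm g g' = 0" unfolding rat by simp
      then show False using nr by (metis Reals_0)
    qed
    have Qz0: "Q z1 z2 \<noteq> 0"
    proof
      assume "Q z1 z2 = 0"
      then have "L z1 z2 * cnj (L z1 z2) = 0" unfolding LQ by simp
      then show False using Lz0 by simp
    qed
    have e1: "herm p g' = cnj c2 * cnj (L h1 h2)" unfolding gh herm_smult_right hpu ..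
    have e2: "herm g g = - (c1 * cnj c1) * of_real (N z1 z2)" unfolding gz hxx ccnj by simp
    have e3: "herm g g' = - c1 * cnj c2 * of_real (BN z1 z2 h1 h2)"
      unfolding gz gh herm_smult_left herm_smult_right hu by simp
    have e4: "herm p g = cnj c1 * cnj (L z1 z2)" unfolding gz herm_smult_right hpu ..
    have e5: "of_real (Q z1 z2) = L z1 z2 * cnj (L z1 z2)" using LQ by simp
    have expr: "herm p g' * herm g g / (herm g g' * herm p g)
        = of_real (N z1 z2 / (BN z1 z2 h1 h2 * Q z1 z2)) * (L z1 z2 * cnj (L h1 h2))"
      unfolding e1 e2 e3 e4 of_real_divide of_real_mult e5
      using c1 c2 Lz0 BN0 by (simp add: field_simps)
    have ReE: "Re (herm p g' * herm g g / (herm g g' * herm p g))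
        = N z1 z2 / (BN z1 z2 h1 h2 * Q z1 z2) * BQ z1 z2 h1 h2"
      unfolding expr Lq by simp
    have "ta_geod_cgeod G p = ta_pt_cgeod g p \<longleftrightarrow> Q z1 z2 / N z1 z2 = Q k1 k2 / N k1 k2"
      unfolding INF gz using charq[OF c1 Nz] by auto
    also have "\<dots> \<longleftrightarrow> Q z1 z2 * BN z1 z2 h1 h2 = N z1 z2 * BQ z1 z2 h1 h2"
      using iffk Nz cr by blast
    also have "\<dots> \<longleftrightarrow> N z1 z2 / (BN z1 z2 h1 h2 * Q z1 z2) * BQ z1 z2 h1 h2 = 1"
      using BN0 Qz0 by (auto simp: field_simps)
    finally show ?thesis using ex1 ReE by simp
  qed
  show ?thesis using part1 part2 by blast
qed

end
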